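(* Let $\sigma_X>0$, $R_c\ge0$, $P\ge0$. Then $\underline D'(0,R_c,P|\mathcal N(\mu_X,\sigma_X^2))=\sigma_X^2+(\sigma_X-\sqrt P)_+^2$, and for $R>0$, $$\underline D'(R,R_c,P|\mathcal N(\mu_X,\sigma_X^2))=\begin{cases}\sigma_X^2e^{-2R}&\text{if }\frac{\sqrt P}{\sigma_X}\ge(1-\sqrt{1-e^{-2R}})\vee e^{-(R+R_c)},\\[2pt] \sigma_X^2+(\sigma_X-\sqrt P)^2-2\sigma_X(\sigma_X-\sqrt P)\sqrt{1-e^{-2R}}&\text{if }\frac{\sqrt P}{\sigma_X}\in[e^{-(R+R_c)},1-\sqrt{1-e^{-2R}}),\\[2pt] \sigma_X^2e^{-2R}+(\sigma_Xe^{-(R+R_c)}-\sqrt P)^2&\text{if }\frac{\sqrt P}{\sigma_X}\in[\nu(R,R_c),e^{-(R+R_c)}),\\[2pt] \sigma_X^2+(\sigma_X-\sqrt P)^2-2\sigma_X^2\sqrt{1-e^{-2R}}\sqrt{(1-e^{-(R+R_c)})\big(1+e^{-(R+R_c)}-\tfrac{2\sqrt P}{\sigma_X}\big)}&\text{if }\frac{\sqrt P}{\sigma_X}<\nu(R,R_c)\wedge e^{-(R+R_c)},\end{cases}$$ where $\nu(R,R_c):=\frac{e^{-2R}-e^{-2(R+R_c)}}{2-2e^{-(R+R_c)}}$. Moreover, the intervals $[e^{-(R+R_c)},1-\sqrt{1-e^{-2R}})$ and $[\nu(R,R_c),e^{-(R+R_c)})$ are never both non-empty.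
   Context: All logarithms are natural; $(a)_+:=\max\{a,0\}$, $a\vee b:=\max\{a,b\}$, $a\wedge b:=\min\{a,b\}$. For $R,R_c\ge0$, $P\ge 0$, $$\underline D'(R,R_c,P|\mathcal N(\mu_X,\sigma_X^2)):=\min_{\sigma_{\hat X}\in[(\sigma_X-\sqrt P)_+,\sigma_X]}\Big(\sigma_X^2+\sigma_{\hat X}^2-2\sigma_X\sqrt{(1-e^{-2R})\big(\sigma_{\hat X}^2-((\sigma_Xe^{-(R+R_c)}-\sqrt P)_+)^2\big)}\Big).$$ *)

theory Defs
  imports Complex_Main
begin

definition pos_part :: "real \<Rightarrow> real" where
  "pos_part a = max a 0"

text \<open>Lower bound D'(R,R_c,P | N(mu,sigma^2)); the minimum over the compact interval is
  written as the infimum of the (continuous) objective over that interval.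
  The mean mu does not enter the formula.\<close>
definition Dlow' :: "real \<Rightarrow> real \<Rightarrow> real \<Rightarrow> real \<Rightarrow> real \<Rightarrow> real" where
  "Dlow' R Rc P mu sigma =
     Inf ((\<lambda>s. sigma\<^sup>2 + s\<^sup>2 - 2 * sigma *
              sqrt ((1 - exp (-2*R)) * (s\<^sup>2 - (pos_part (sigma * exp (-(R+Rc)) - sqrt P))\<^sup>2)))
          ` {pos_part (sigma - sqrt P) .. sigma})"

definition nu :: "real \<Rightarrow> real \<Rightarrow> real" where
  "nu R Rc = (exp (-2*R) - exp (-2*(R+Rc))) / (2 - 2 * exp (-(R+Rc)))"

end

theory Submission
  imports Defs
begin

definition FF :: "real \<Rightarrow> real \<Rightarrow> real \<Rightarrow> real \<Rightarrow> real" where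
  "FF sg c t s = sg\<^sup>2 + s\<^sup>2 - 2 * sg * sqrt (c * (s\<^sup>2 - t\<^sup>2))"

lemma inf_min:
  assumes "z \<in> S" "\<And>s. s \<in> S \<Longrightarrow> f z \<le> f s"
  shows "Inf (f ` S) = (f z :: real)"
  by (rule cInf_eq_minimum) (use assms in auto)

lemma amgm:
  fixes sg c t s :: real
  assumes "sg > 0" "c \<ge> 0" "t\<^sup>2 \<le> s\<^sup>2"
  shows "FF sg c t s \<ge> sg\<^sup>2 * (1 - c) + t\<^sup>2"
proof -
  define y where "y = sqrt (s\<^sup>2 - t\<^sup>2)"
  have y2: "y\<^sup>2 = s\<^sup>2 - t\<^sup>2" using assms(3) by (simp add: y_def)
  have sc: "(sqrt c)\<^sup>2 = c" using assms(2) by simp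
  have e: "sqrt (c * (s\<^sup>2 - t\<^sup>2)) = sqrt c * y" by (simp add: y_def real_sqrt_mult)
  have "0 \<le> (sg * sqrt c - y)\<^sup>2" by simp
  hence "2 * sg * (sqrt c * y) \<le> sg\<^sup>2 * (sqrt c)\<^sup>2 + y\<^sup>2"
    by (simp add: power2_eq_square algebra_simps)
  thus ?thesis unfolding FF_def e using sc y2 by (simp add: algebra_simps)
qed

lemma bdry:
  fixes sg c t s s0 :: real
  assumes "sg > 0" "c \<ge> 0" "0 \<le> s0" "s0 \<le> s" "t\<^sup>2 \<le> s0\<^sup>2" "sg\<^sup>2 * c \<le> s0\<^sup>2 - t\<^sup>2"
  shows "FF sg c t s0 \<le> FF sg c t s"
proof -
  have ss: "s0\<^sup>2 \<le> s\<^sup>2" using assms(3,4) by (simp add: power_mono)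
  define x where "x = sqrt (s\<^sup>2 - t\<^sup>2)"
  define y where "y = sqrt (s0\<^sup>2 - t\<^sup>2)"
  have x2: "x\<^sup>2 = s\<^sup>2 - t\<^sup>2" using assms(5) ss by (simp add: x_def)
  have y2: "y\<^sup>2 = s0\<^sup>2 - t\<^sup>2" using assms(5) by (simp add: y_def)
  have yx: "y \<le> x" unfolding x_def y_def using ss by simp
  have "sqrt (sg\<^sup>2 * c) \<le> y" unfolding y_def using assms(6) by (simp only: real_sqrt_le_iff)
  hence cy: "sg * sqrt c \<le> y" using assms(1) by (simp add: real_sqrt_mult)
  have ex: "sqrt (c * (s\<^sup>2 - t\<^sup>2)) = sqrt c * x" by (simp add: x_def real_sqrt_mult)
  have ey: "sqrt (c * (s0\<^sup>2 - t\<^sup>2)) = sqrt c * y" by (simp add: y_def real_sqrt_mult)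
  have "0 \<le> (x - y) * (x + y - 2 * (sg * sqrt c))"
    using yx cy by (intro mult_nonneg_nonneg) auto
  hence "0 \<le> x\<^sup>2 - y\<^sup>2 - 2 * sg * (sqrt c * x - sqrt c * y)"
    by (simp add: power2_eq_square algebra_simps)
  thus ?thesis unfolding FF_def ex ey using x2 y2 by (simp add: algebra_simps)
qed

lemma dom_t:
  fixes sg p q s :: real
  assumes "sg > 0" "p \<ge> 0" "0 \<le> q" "q \<le> 1" "s \<in> {pos_part (sg - p) .. sg}"
  shows "(pos_part (sg * q - p))\<^sup>2 \<le> s\<^sup>2" "0 \<le> s"
proof -
  have "sg * q \<le> sg" using assms by (simp add: mult_left_le)
  hence "pos_part (sg * q - p) \<le> s" "0 \<le> pos_part (sg * q - p)" "0 \<le> s"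
    using assms(5) by (auto simp: pos_part_def)
  thus "(pos_part (sg * q - p))\<^sup>2 \<le> s\<^sup>2" "0 \<le> s" by (auto intro: power_mono)
qed

lemma zdom: "sg > 0 \<Longrightarrow> p \<ge> 0 \<Longrightarrow> pos_part (sg - p) \<in> {pos_part (sg - p) .. sg}"
  by (auto simp: pos_part_def)

lemma case0:
  fixes sg p q :: real
  assumes "sg > 0" "p \<ge> 0" "0 \<le> q" "q \<le> 1"
  shows "Inf (FF sg 0 (pos_part (sg * q - p)) ` {pos_part (sg - p) .. sg}) = sg\<^sup>2 + (pos_part (sg - p))\<^sup>2"
proof -
  have "Inf (FF sg 0 (pos_part (sg * q - p)) ` {pos_part (sg - p) .. sg}) = FF sg 0 (pos_part (sg * q - p)) (pos_part (sg - p))"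
  proof (rule inf_min)
    show "pos_part (sg - p) \<in> {pos_part (sg - p) .. sg}" using zdom assms by blast
    fix s assume s: "s \<in> {pos_part (sg - p) .. sg}"
    have "0 \<le> pos_part (sg - p)" by (simp add: pos_part_def)
    hence "(pos_part (sg - p))\<^sup>2 \<le> s\<^sup>2" using s by (auto intro: power_mono)
    thus "FF sg 0 (pos_part (sg * q - p)) (pos_part (sg - p)) \<le> FF sg 0 (pos_part (sg * q - p)) s"
      by (simp add: FF_def)
  qed
  thus ?thesis by (simp add: FF_def)
qed

lemma case1:
  fixes sg p q a :: real
  assumes "sg > 0" "p \<ge> 0" "0 \<le> q" "q \<le> 1" "0 < a" "a < 1"
    and h1: "p / sg \<ge> 1 - sqrt (1 - a)" and h2: "p / sg \<ge> q"
  shows "Inf (FF sg (1 - a) (pos_part (sg * q - p)) ` {pos_part (sg - p) .. sg}) = sg\<^sup>2 * a"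
proof -
  have t0: "pos_part (sg * q - p) = 0" using h2 assms(1) by (simp add: pos_part_def field_simps)
  have sc: "sqrt (1 - a) \<le> 1" "0 \<le> sqrt (1 - a)" using assms by auto
  have "sg - p \<le> sg * sqrt (1 - a)" using h1 assms(1) by (simp add: field_simps)
  hence zin: "sg * sqrt (1 - a) \<in> {pos_part (sg - p) .. sg}"
    using sc assms(1) by (auto simp: pos_part_def mult_left_le)
  have val: "FF sg (1 - a) 0 (sg * sqrt (1 - a)) = sg\<^sup>2 * a"
  proof -
    have e1: "sqrt ((1 - a) * ((sg * sqrt (1 - a))\<^sup>2 - 0\<^sup>2)) = sg * (1 - a)"
      using assms by (simp add: power_mult_distrib real_sqrt_mult)
    have e2: "(sg * sqrt (1 - a))\<^sup>2 = sg\<^sup>2 * (1 - a)" using assms by (simp add: power_mult_distrib)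
    show ?thesis unfolding FF_def unfolding e1 unfolding e2 by (simp add: algebra_simps power2_eq_square)
  qed
  have "Inf (FF sg (1 - a) 0 ` {pos_part (sg - p) .. sg}) = FF sg (1 - a) 0 (sg * sqrt (1 - a))"
  proof (rule inf_min)
    show "sg * sqrt (1 - a) \<in> {pos_part (sg - p) .. sg}" by (rule zin)
    fix s assume s: "s \<in> {pos_part (sg - p) .. sg}"
    have "(0::real)\<^sup>2 \<le> s\<^sup>2" by simp
    from amgm[OF assms(1) _ this, of "1 - a"] assms
    show "FF sg (1 - a) 0 (sg * sqrt (1 - a)) \<le> FF sg (1 - a) 0 s" by (simp add: val)
  qed
  thus ?thesis using t0 val by simp
qed


lemma case2:
  fixes sg p q a :: real
  assumes "sg > 0" "p \<ge> 0" "0 \<le> q" "q \<le> 1" "0 < a" "a < 1"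
    and h1: "p / sg < 1 - sqrt (1 - a)" and h2: "q \<le> p / sg"
  shows "Inf (FF sg (1 - a) (pos_part (sg * q - p)) ` {pos_part (sg - p) .. sg})
     = sg\<^sup>2 + (sg - p)\<^sup>2 - 2 * sg * (sg - p) * sqrt (1 - a)"
proof -
  have t0: "pos_part (sg * q - p) = 0" using h2 assms(1) by (simp add: pos_part_def field_simps)
  have sc: "0 \<le> sqrt (1 - a)" using assms by auto
  have lt: "sg * sqrt (1 - a) < sg - p" using h1 assms(1) by (simp add: field_simps)
  have sc0: "0 \<le> sg * sqrt (1 - a)" using sc assms(1) by simp
  hence pp: "pos_part (sg - p) = sg - p" using lt by (simp add: pos_part_def)
  have sq: "sg\<^sup>2 * (1 - a) \<le> (sg - p)\<^sup>2"
  proof -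
    have "(sg * sqrt (1 - a))\<^sup>2 \<le> (sg - p)\<^sup>2" using lt sc assms(1) by (intro power_mono) auto
    thus ?thesis using assms by (simp add: power_mult_distrib)
  qed
  have "Inf (FF sg (1 - a) 0 ` {pos_part (sg - p) .. sg}) = FF sg (1 - a) 0 (sg - p)"
  proof (rule inf_min)
    show "sg - p \<in> {pos_part (sg - p) .. sg}" using pp assms by auto
    fix s assume s: "s \<in> {pos_part (sg - p) .. sg}"
    show "FF sg (1 - a) 0 (sg - p) \<le> FF sg (1 - a) 0 s"
      using s pp sq assms lt sc sc0 by (intro bdry) auto
  qed
  moreover have "FF sg (1 - a) 0 (sg - p) = sg\<^sup>2 + (sg - p)\<^sup>2 - 2 * sg * (sg - p) * sqrt (1 - a)"
  proof -
    have "sqrt ((1 - a) * ((sg - p)\<^sup>2 - 0\<^sup>2)) = sqrt (1 - a) * (sg - p)"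
      using lt sc0 by (simp add: real_sqrt_mult)
    thus ?thesis unfolding FF_def by simp
  qed
  ultimately show ?thesis using t0 by simp
qed

lemma case3:
  fixes sg p q a :: real
  assumes "sg > 0" "p \<ge> 0" "0 \<le> q" "q < 1" "0 < a" "a < 1" "q\<^sup>2 \<le> a"
    and h1: "(a - q\<^sup>2) / (2 - 2 * q) \<le> p / sg" and h2: "p / sg < q"
  shows "Inf (FF sg (1 - a) (pos_part (sg * q - p)) ` {pos_part (sg - p) .. sg})
     = sg\<^sup>2 * a + (sg * q - p)\<^sup>2"
proof -
  define t where "t = sg * q - p"
  have tp: "t > 0" using h2 assms(1) by (simp add: t_def field_simps)
  have t0: "pos_part (sg * q - p) = t" using tp by (simp add: pos_part_def t_def)
  have tle: "t \<le> sg * q" using assms by (simp add: t_def)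
  have t2: "t\<^sup>2 \<le> sg\<^sup>2 * a"
  proof -
    have "t\<^sup>2 \<le> (sg * q)\<^sup>2" using tp tle by (intro power_mono) auto
    also have "\<dots> \<le> sg\<^sup>2 * a" using assms by (simp add: power_mult_distrib)
    finally show ?thesis .
  qed
  have h1': "sg * (a - q\<^sup>2) \<le> 2 * p * (1 - q)"
    using h1 assms(1,4) by (simp add: field_simps)
  define z where "z = sqrt (t\<^sup>2 + sg\<^sup>2 * (1 - a))"
  have "0 \<le> sg\<^sup>2 * (1 - a)" using assms by simp
  moreover have "0 \<le> t\<^sup>2" by simp
  ultimately have zz: "0 \<le> t\<^sup>2 + sg\<^sup>2 * (1 - a)" by linarith
  hence z2: "z\<^sup>2 = t\<^sup>2 + sg\<^sup>2 * (1 - a)" unfolding z_def by (rule real_sqrt_pow2)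
  have z0: "0 \<le> z" unfolding z_def using zz by simp
  have zle: "z \<le> sg"
  proof -
    have "z\<^sup>2 \<le> sg\<^sup>2" using z2 t2 by (simp add: algebra_simps)
    thus ?thesis using z0 assms(1) by (simp add: power2_le_iff_abs_le)
  qed
  have zge: "sg - p \<le> z"
  proof (cases "sg - p \<le> 0")
    case True thus ?thesis using z0 by linarith
  next
    case False
    have "(sg - p)\<^sup>2 - t\<^sup>2 = sg * (1 - q) * (sg * (1 + q) - 2 * p)"
      by (simp add: t_def power2_eq_square algebra_simps)
    also have "\<dots> = sg\<^sup>2 * (1 - q\<^sup>2) - sg * (2 * p * (1 - q))"
      by (simp add: power2_eq_square algebra_simps)
    also have "\<dots> \<le> sg\<^sup>2 * (1 - q\<^sup>2) - sg * (sg * (a - q\<^sup>2))"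
      using h1' assms(1) by (intro diff_left_mono mult_left_mono) auto
    also have "\<dots> = sg\<^sup>2 * (1 - a)" by (simp add: power2_eq_square algebra_simps)
    finally have "(sg - p)\<^sup>2 \<le> z\<^sup>2" using z2 by simp
    thus ?thesis using z0 False by (simp add: power2_le_iff_abs_le)
  qed
  have zin: "z \<in> {pos_part (sg - p) .. sg}" using zle zge z0 by (auto simp: pos_part_def)
  have val: "FF sg (1 - a) t z = sg\<^sup>2 * a + t\<^sup>2"
  proof -
    have e1: "sqrt ((1 - a) * (z\<^sup>2 - t\<^sup>2)) = sg * (1 - a)"
    proof -
      have hh: "z\<^sup>2 - t\<^sup>2 = sg\<^sup>2 * (1 - a)" using z2 by simp
      have "(1 - a) * (z\<^sup>2 - t\<^sup>2) = (sg * (1 - a))\<^sup>2" unfolding hh by (simp add: power2_eq_square algebra_simps)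
      moreover have "0 \<le> sg * (1 - a)" using assms by simp
      ultimately show ?thesis by simp
    qed
    show ?thesis unfolding FF_def e1 unfolding z2 by (simp add: algebra_simps power2_eq_square)
  qed
  have "Inf (FF sg (1 - a) t ` {pos_part (sg - p) .. sg}) = FF sg (1 - a) t z"
  proof (rule inf_min)
    show "z \<in> {pos_part (sg - p) .. sg}" by (rule zin)
    fix s assume s: "s \<in> {pos_part (sg - p) .. sg}"
    have "t\<^sup>2 \<le> s\<^sup>2" using dom_t[OF assms(1,2,3) _ s] assms(4) t0 by simp
    from amgm[OF assms(1) _ this, of "1 - a"] assms
    show "FF sg (1 - a) t z \<le> FF sg (1 - a) t s" by (simp add: val)
  qed
  thus ?thesis using t0 val t_def by simp
qed

lemma case4:
  fixes sg p q a :: real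
  assumes "sg > 0" "p \<ge> 0" "0 \<le> q" "q < 1" "0 < a" "a < 1"
    and h1: "p / sg < (a - q\<^sup>2) / (2 - 2 * q)" and h2: "p / sg < q"
  shows "Inf (FF sg (1 - a) (pos_part (sg * q - p)) ` {pos_part (sg - p) .. sg})
     = sg\<^sup>2 + (sg - p)\<^sup>2 - 2 * sg\<^sup>2 * sqrt (1 - a) * sqrt ((1 - q) * (1 + q - 2 * p / sg))"
proof -
  define t where "t = sg * q - p"
  have tp: "t > 0" using h2 assms(1) by (simp add: t_def field_simps)
  have t0: "pos_part (sg * q - p) = t" using tp by (simp add: pos_part_def t_def)
  have "p < q * sg" using h2 assms(1) by (simp add: field_simps)
  moreover have "q * sg \<le> sg" using assms by (simp add: mult_left_le_one_le)
  ultimately have plt: "p < sg" by simp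
  have pp: "pos_part (sg - p) = sg - p" using plt by (simp add: pos_part_def)
  have h1': "2 * p * (1 - q) < sg * (a - q\<^sup>2)"
    using h1 assms(1,4) by (simp add: field_simps)
  have key: "(sg - p)\<^sup>2 - t\<^sup>2 = sg\<^sup>2 * ((1 - q) * (1 + q - 2 * p / sg))"
    using assms(1) by (simp add: t_def power2_eq_square field_simps)
  have sq: "sg\<^sup>2 * (1 - a) \<le> (sg - p)\<^sup>2 - t\<^sup>2"
  proof -
    have "(sg - p)\<^sup>2 - t\<^sup>2 = sg\<^sup>2 * (1 - q\<^sup>2) - sg * (2 * p * (1 - q))"
      by (simp add: t_def power2_eq_square algebra_simps)
    also have "\<dots> \<ge> sg\<^sup>2 * (1 - q\<^sup>2) - sg * (sg * (a - q\<^sup>2))"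
      using h1' assms(1) by (intro diff_left_mono mult_left_mono) auto
    moreover have "sg\<^sup>2 * (1 - q\<^sup>2) - sg * (sg * (a - q\<^sup>2)) = sg\<^sup>2 * (1 - a)"
      by (simp add: power2_eq_square algebra_simps)
    ultimately show ?thesis by simp
  qed
  have tle: "t\<^sup>2 \<le> (sg - p)\<^sup>2" using sq assms by (smt (verit) mult_nonneg_nonneg zero_le_power2)
  have "Inf (FF sg (1 - a) t ` {pos_part (sg - p) .. sg}) = FF sg (1 - a) t (sg - p)"
  proof (rule inf_min)
    show "sg - p \<in> {pos_part (sg - p) .. sg}" using pp assms by auto
    fix s assume s: "s \<in> {pos_part (sg - p) .. sg}"
    show "FF sg (1 - a) t (sg - p) \<le> FF sg (1 - a) t s"
      using s pp sq assms plt tle by (intro bdry) auto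
  qed
  moreover have "FF sg (1 - a) t (sg - p) = sg\<^sup>2 + (sg - p)\<^sup>2 - 2 * sg\<^sup>2 * sqrt (1 - a) * sqrt ((1 - q) * (1 + q - 2 * p / sg))"
  proof -
    have "sqrt ((1 - a) * ((sg - p)\<^sup>2 - t\<^sup>2)) = sqrt (1 - a) * (sg * sqrt ((1 - q) * (1 + q - 2 * p / sg)))"
      unfolding key using assms(1) by (simp add: real_sqrt_mult)
    thus ?thesis unfolding FF_def by (simp add: power2_eq_square algebra_simps)
  qed
  ultimately show ?thesis using t0 by simp
qed

lemma case5:
  fixes q a :: real
  assumes "0 \<le> q" "q < 1" "a < 1"
  shows "\<not> (q < 1 - sqrt (1 - a) \<and> (a - q\<^sup>2) / (2 - 2 * q) < q)"
proof
  assume h: "q < 1 - sqrt (1 - a) \<and> (a - q\<^sup>2) / (2 - 2 * q) < q"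
  hence "a - q\<^sup>2 < q * (2 - 2 * q)" using assms by (simp add: field_simps)
  hence "(1 - q)\<^sup>2 < 1 - a" by (simp add: power2_eq_square algebra_simps)
  hence "sqrt ((1 - q)\<^sup>2) < sqrt (1 - a)" by (simp only: real_sqrt_less_iff)
  hence "1 - q < sqrt (1 - a)" using assms by simp
  thus False using h by simp
qed


lemma Dlow_FF: "Dlow' R Rc P mu sg = Inf (FF sg (1 - exp (-2*R)) (pos_part (sg * exp (-(R+Rc)) - sqrt P)) ` {pos_part (sg - sqrt P) .. sg})"
  unfolding Dlow'_def FF_def by (rule refl)

lemma nu_eq: "nu R Rc = (exp (-2*R) - (exp (-(R+Rc)))\<^sup>2) / (2 - 2 * exp (-(R+Rc)))"
proof -
  have "(exp (-(R+Rc)))\<^sup>2 = exp (-2*(R+Rc))" by (simp add: power2_eq_square exp_add[symmetric])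
  thus ?thesis by (simp add: nu_def)
qed

theorem mainTheorem8:
  fixes mu sigma Rc P :: real
  assumes "sigma > 0" and "Rc \<ge> 0" and "P \<ge> 0"
  shows "(Dlow' 0 Rc P mu sigma = sigma\<^sup>2 + (pos_part (sigma - sqrt P))\<^sup>2)
    \<and> (\<forall>R>0. sqrt P / sigma \<ge> max (1 - sqrt (1 - exp (-2*R))) (exp (-(R+Rc))) \<longrightarrow>
            Dlow' R Rc P mu sigma = sigma\<^sup>2 * exp (-2*R))
    \<and> (\<forall>R>0. exp (-(R+Rc)) \<le> sqrt P / sigma \<and> sqrt P / sigma < 1 - sqrt (1 - exp (-2*R)) \<longrightarrow>
            Dlow' R Rc P mu sigma =
              sigma\<^sup>2 + (sigma - sqrt P)\<^sup>2 - 2 * sigma * (sigma - sqrt P) * sqrt (1 - exp (-2*R)))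
    \<and> (\<forall>R>0. nu R Rc \<le> sqrt P / sigma \<and> sqrt P / sigma < exp (-(R+Rc)) \<longrightarrow>
            Dlow' R Rc P mu sigma = sigma\<^sup>2 * exp (-2*R) + (sigma * exp (-(R+Rc)) - sqrt P)\<^sup>2)
    \<and> (\<forall>R>0. sqrt P / sigma < min (nu R Rc) (exp (-(R+Rc))) \<longrightarrow>
            Dlow' R Rc P mu sigma =
              sigma\<^sup>2 + (sigma - sqrt P)\<^sup>2 - 2 * sigma\<^sup>2 * sqrt (1 - exp (-2*R)) *
                sqrt ((1 - exp (-(R+Rc))) * (1 + exp (-(R+Rc)) - 2 * sqrt P / sigma)))
    \<and> (\<forall>R>0. \<not> (exp (-(R+Rc)) < 1 - sqrt (1 - exp (-2*R)) \<and> nu R Rc < exp (-(R+Rc))))"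
proof -
  have p0: "sqrt P \<ge> 0" using assms by simp
  have q0: "exp (-(0+Rc)) \<le> 1" using assms by simp
  have R0: "Dlow' 0 Rc P mu sigma = sigma\<^sup>2 + (pos_part (sigma - sqrt P))\<^sup>2"
    using case0[OF assms(1) p0 _ q0] by (simp add: Dlow_FF)
  {
    fix R :: real assume R: "R > 0"
    define q where "q = exp (-(R+Rc))"
    define a where "a = exp (-2*R)"
    have qp: "0 \<le> q" "q < 1" using R assms by (auto simp: q_def)
    have ap: "0 < a" "a < 1" using R by (auto simp: a_def)
    have qa: "q\<^sup>2 \<le> a"
    proof -
      have "q\<^sup>2 = exp (-2*(R+Rc))" by (simp add: q_def power2_eq_square exp_add[symmetric])
      thus ?thesis using assms by (simp add: a_def)
    qed
    have D: "Dlow' R Rc P mu sigma = Inf (FF sigma (1 - a) (pos_part (sigma * q - sqrt P)) ` {pos_part (sigma - sqrt P) .. sigma})"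
      by (simp add: Dlow_FF a_def q_def)
    have N: "nu R Rc = (a - q\<^sup>2) / (2 - 2 * q)" by (simp add: nu_eq a_def q_def)
    have "(sqrt P / sigma \<ge> max (1 - sqrt (1 - exp (-2*R))) (exp (-(R+Rc))) \<longrightarrow>
            Dlow' R Rc P mu sigma = sigma\<^sup>2 * exp (-2*R))
    \<and> (exp (-(R+Rc)) \<le> sqrt P / sigma \<and> sqrt P / sigma < 1 - sqrt (1 - exp (-2*R)) \<longrightarrow>
            Dlow' R Rc P mu sigma =
              sigma\<^sup>2 + (sigma - sqrt P)\<^sup>2 - 2 * sigma * (sigma - sqrt P) * sqrt (1 - exp (-2*R)))
    \<and> (nu R Rc \<le> sqrt P / sigma \<and> sqrt P / sigma < exp (-(R+Rc)) \<longrightarrow>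
            Dlow' R Rc P mu sigma = sigma\<^sup>2 * exp (-2*R) + (sigma * exp (-(R+Rc)) - sqrt P)\<^sup>2)
    \<and> (sqrt P / sigma < min (nu R Rc) (exp (-(R+Rc))) \<longrightarrow>
            Dlow' R Rc P mu sigma =
              sigma\<^sup>2 + (sigma - sqrt P)\<^sup>2 - 2 * sigma\<^sup>2 * sqrt (1 - exp (-2*R)) *
                sqrt ((1 - exp (-(R+Rc))) * (1 + exp (-(R+Rc)) - 2 * sqrt P / sigma)))
    \<and> (\<not> (exp (-(R+Rc)) < 1 - sqrt (1 - exp (-2*R)) \<and> nu R Rc < exp (-(R+Rc))))"
      unfolding D N a_def[symmetric] q_def[symmetric]
      using case1[OF assms(1) p0 qp(1) _ ap] case2[OF assms(1) p0 qp(1) _ ap]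
        case3[OF assms(1) p0 qp ap qa] case4[OF assms(1) p0 qp ap] case5[OF qp ap(2)] qp
      by auto
  }
  thus ?thesis using R0 by blast
qed

end
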